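(* Let $k\in\mathbb N$, $n=2^k$, and let $G=\mathrm{Cay}(\mathbb Z_n,S)$ be an integral circulant graph with $S=\frac n2-S$ and $|S\cap S_n(d)|\equiv0\pmod4$ for every proper divisor $d$ of $n$. Then for each $x\in\mathbb Z_n$, the graph obtained from $G$ by adding a new edge (of weight $1$) between the twin vertices $x$ and $x+\frac n2$ exhibits Laplacian perfect state transfer between $x$ and $x+\frac n2$ at time $\frac\pi2$, and it is periodic at every remaining vertex at time $\frac\pi2$.
   Context: $\mathrm{Cay}(\mathbb Z_n,S)$ ($0\notin S$, $-S=S$) has vertex set $\mathbb Z_n$ with $a\sim b$ iff $a-b\in S$; it is integral if all its adjacency eigenvalues are integers. $\frac n2-S=\{\frac n2-s:s\in S\}$. $S_n(d)=\{x\in\mathbb Z_n:\gcd(x,n)=d\}$. Twin vertices $u\ne v$: $N(u)\setminus\{v\}=N(v)\setminus\{u\}$. For a graph with Laplacian $L=D-A$, $U_L(t)=\exp(-itL)$; Laplacian perfect state transfer between distinct $u,v$ at time $\tau$ means $U_L(\tau)\mathbf e_u=\gamma\mathbf e_v$ for some $\gamma\in\mathbb C$; periodic at $w$ at time $\tau\ne0$ means $U_L(\tau)\mathbf e_w=\gamma\mathbf e_w$ for some $\gamma\in\mathbb C$. *)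

theory Defs
  imports Complex_Main
begin

text \<open>Square matrices of size n are represented as functions nat => nat => complex,
  with indices in {0..<n}; vertices of Z_n are 0..n-1.\<close>

definition mat_mult :: "nat \<Rightarrow> (nat \<Rightarrow> nat \<Rightarrow> complex) \<Rightarrow> (nat \<Rightarrow> nat \<Rightarrow> complex) \<Rightarrow> nat \<Rightarrow> nat \<Rightarrow> complex" where
  "mat_mult n A B = (\<lambda>u v. \<Sum>w<n. A u w * B w v)"

fun mat_pow :: "nat \<Rightarrow> (nat \<Rightarrow> nat \<Rightarrow> complex) \<Rightarrow> nat \<Rightarrow> nat \<Rightarrow> nat \<Rightarrow> complex" where
  "mat_pow n A 0 = (\<lambda>u v. if u = v then 1 else 0)"
| "mat_pow n A (Suc m) = mat_mult n (mat_pow n A m) A"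

definition mat_exp :: "nat \<Rightarrow> (nat \<Rightarrow> nat \<Rightarrow> complex) \<Rightarrow> nat \<Rightarrow> nat \<Rightarrow> complex" where
  "mat_exp n M = (\<lambda>u v. \<Sum>m. mat_pow n M m u v / of_nat (fact m))"

definition laplacian :: "nat \<Rightarrow> (nat \<Rightarrow> nat \<Rightarrow> complex) \<Rightarrow> nat \<Rightarrow> nat \<Rightarrow> complex" where
  "laplacian n A = (\<lambda>u v. (if u = v then (\<Sum>w<n. A u w) else 0) - A u v)"

definition U_L :: "nat \<Rightarrow> (nat \<Rightarrow> nat \<Rightarrow> complex) \<Rightarrow> real \<Rightarrow> nat \<Rightarrow> nat \<Rightarrow> complex" where
  "U_L n A t = mat_exp n (\<lambda>u v. - (\<i> * of_real t) * laplacian n A u v)"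

definition lap_PST :: "nat \<Rightarrow> (nat \<Rightarrow> nat \<Rightarrow> complex) \<Rightarrow> nat \<Rightarrow> nat \<Rightarrow> real \<Rightarrow> bool" where
  "lap_PST n A u v \<tau> \<longleftrightarrow> u < n \<and> v < n \<and> u \<noteq> v \<and>
     (\<exists>\<gamma>::complex. \<forall>w<n. U_L n A \<tau> w u = \<gamma> * (if w = v then 1 else 0))"

definition lap_periodic :: "nat \<Rightarrow> (nat \<Rightarrow> nat \<Rightarrow> complex) \<Rightarrow> nat \<Rightarrow> real \<Rightarrow> bool" where
  "lap_periodic n A w \<tau> \<longleftrightarrow> w < n \<and> \<tau> \<noteq> 0 \<and>
     (\<exists>\<gamma>::complex. \<forall>w'<n. U_L n A \<tau> w' w = \<gamma> * (if w' = w then 1 else 0))"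

definition cay_adj :: "nat \<Rightarrow> nat set \<Rightarrow> nat \<Rightarrow> nat \<Rightarrow> bool" where
  "cay_adj n S a b \<longleftrightarrow> (a + n - b) mod n \<in> S"

definition cay_adjmat :: "nat \<Rightarrow> nat set \<Rightarrow> nat \<Rightarrow> nat \<Rightarrow> complex" where
  "cay_adjmat n S = (\<lambda>a b. if cay_adj n S a b then 1 else 0)"

definition conn_set :: "nat \<Rightarrow> nat set \<Rightarrow> bool" where
  "conn_set n S \<longleftrightarrow> S \<subseteq> {0..<n} \<and> 0 \<notin> S \<and> (\<forall>s\<in>S. (n - s) mod n \<in> S)"

definition is_eigenvalue :: "nat \<Rightarrow> (nat \<Rightarrow> nat \<Rightarrow> complex) \<Rightarrow> complex \<Rightarrow> bool" where
  "is_eigenvalue n A c \<longleftrightarrow> (\<exists>x::nat \<Rightarrow> complex. (\<exists>w<n. x w \<noteq> 0) \<and>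
      (\<forall>u<n. (\<Sum>w<n. A u w * x w) = c * x u))"

definition integral_graph :: "nat \<Rightarrow> (nat \<Rightarrow> nat \<Rightarrow> complex) \<Rightarrow> bool" where
  "integral_graph n A \<longleftrightarrow> (\<forall>c. is_eigenvalue n A c \<longrightarrow> c \<in> \<int>)"

definition half_minus :: "nat \<Rightarrow> nat set \<Rightarrow> nat set" where
  "half_minus n S = (\<lambda>s. (n div 2 + n - s) mod n) ` S"

definition S_n :: "nat \<Rightarrow> nat \<Rightarrow> nat set" where
  "S_n n d = {x. x < n \<and> gcd x n = d}"

definition twins :: "nat \<Rightarrow> (nat \<Rightarrow> nat \<Rightarrow> bool) \<Rightarrow> nat \<Rightarrow> nat \<Rightarrow> bool" where
  "twins n adj u v \<longleftrightarrow> u \<noteq> v \<and>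
     {w. w < n \<and> adj u w} - {v} = {w. w < n \<and> adj v w} - {u}"

definition add_edge :: "(nat \<Rightarrow> nat \<Rightarrow> complex) \<Rightarrow> nat \<Rightarrow> nat \<Rightarrow> nat \<Rightarrow> nat \<Rightarrow> complex" where
  "add_edge A x y = (\<lambda>u v. A u v + (if (u = x \<and> v = y) \<or> (u = y \<and> v = x) then 1 else 0))"

end

theory Submission imports Defs "HOL-Computational_Algebra.Computational_Algebra" begin

lemma eis_aux:
  fixes A B G :: "int poly"
  assumes GAB: "G = A * B" and dA: "degree A \<ge> 1" and dB: "degree B \<ge> 1"
    and ev: "\<And>i. i < degree G \<Longrightarrow> even (coeff G i)"
    and c0: "coeff G 0 = 2" and lc: "lead_coeff G = 1"
    and a0: "even (coeff A 0)"
  shows False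
proof -
  have A0: "A \<noteq> 0" using dA by auto
  have B0: "B \<noteq> 0" using dB by auto
  have dG: "degree G = degree A + degree B" using GAB A0 B0 degree_mult_eq by blast
  have "lead_coeff A * lead_coeff B = 1" using lc GAB lead_coeff_mult by metis
  hence oddA: "odd (lead_coeff A)" by (metis even_mult_iff odd_one)
  have b0: "odd (coeff B 0)"
  proof
    assume "even (coeff B 0)"
    then obtain q where q: "coeff B 0 = 2*q" by (elim evenE)
    obtain p where p: "coeff A 0 = 2*p" using a0 by (elim evenE)
    have "coeff A 0 * coeff B 0 = 2" using c0 GAB by (simp add: coeff_mult)
    hence "4*(p*q) = 2" using p q by (simp add: algebra_simps)
    thus False by presburger
  qed
  define t where "t = (LEAST i. odd (coeff A i))"
  have tex: "odd (coeff A t)" unfolding t_def by (rule LeastI[of _ "degree A"]) (use oddA in simp)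
  have tle: "t \<le> degree A" unfolding t_def by (rule Least_le) (use oddA in simp)
  have tlt: "\<And>i. i < t \<Longrightarrow> even (coeff A i)" unfolding t_def using not_less_Least by blast
  have "coeff G t = (\<Sum>i\<le>t. coeff A i * coeff B (t - i))" using GAB by (simp add: coeff_mult)
  also have "\<dots> = (\<Sum>i<t. coeff A i * coeff B (t - i)) + coeff A t * coeff B 0"
    by (simp add: lessThan_Suc_atMost[symmetric])
  finally have eq: "coeff G t = (\<Sum>i<t. coeff A i * coeff B (t - i)) + coeff A t * coeff B 0" .
  have "even (\<Sum>i<t. coeff A i * coeff B (t - i))" by (rule dvd_sum) (simp add: tlt)
  moreover have "odd (coeff A t * coeff B 0)" using tex b0 by simp
  ultimately have "odd (coeff G t)" using eq by simp
  moreover have "t < degree G" using tle dG dB by simp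
  ultimately show False using ev by blast
qed

lemma eisenstein:
  fixes A B G :: "int poly"
  assumes GAB: "G = A * B" and dA: "degree A \<ge> 1" and dB: "degree B \<ge> 1"
    and ev: "\<And>i. i < degree G \<Longrightarrow> even (coeff G i)"
    and c0: "coeff G 0 = 2" and lc: "lead_coeff G = 1"
  shows False
proof -
  have "coeff A 0 * coeff B 0 = 2" using c0 GAB by (simp add: coeff_mult)
  hence "even (coeff A 0) \<or> even (coeff B 0)" by (metis even_mult_iff even_numeral)
  thus False
  proof
    assume "even (coeff A 0)" thus False using eis_aux[OF GAB dA dB ev c0 lc] by blast
  next
    assume "even (coeff B 0)" thus False using eis_aux[of G B A] GAB dA dB ev c0 lc by (simp add: mult.commute)
  qed
qed

lemma mp_add: "map_poly (of_int :: int \<Rightarrow> 'a::comm_ring_1) (p + q) = map_poly of_int p + map_poly of_int q"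
  by (rule poly_eqI) (simp add: coeff_map_poly)
lemma mp_mult: "map_poly (of_int :: int \<Rightarrow> 'a::comm_ring_1) (p * q) = map_poly of_int p * map_poly of_int q"
  by (rule poly_eqI) (simp add: coeff_map_poly coeff_mult of_int_sum)
lemma mp_smult: "map_poly (of_int :: int \<Rightarrow> 'a::comm_ring_1) (smult c p) = smult (of_int c) (map_poly of_int p)"
  by (rule poly_eqI) (simp add: coeff_map_poly)
lemma mp_one: "map_poly (of_int :: int \<Rightarrow> 'a::comm_ring_1) 1 = 1"
  by simp
lemma mp_pow: "map_poly (of_int :: int \<Rightarrow> 'a::comm_ring_1) (p ^ n) = (map_poly of_int p) ^ n"
  by (induction n) (simp_all add: mp_mult)
lemma mp_X: "map_poly (of_int :: int \<Rightarrow> 'a::comm_ring_1) [:0,1:] = [:0,1:]"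
  by (simp add: map_poly_pCons)

lemma pcompose_pow: "pcompose (p ^ n) r = (pcompose p r) ^ n"
  by (induction n) (simp_all add: pcompose_1 pcompose_mult)

lemma pow2_struct: "\<exists>R::int poly. [:1,1:]^(2^b) = [:0,1:]^(2^b) + 1 + smult 2 R \<and> degree R < 2^b"
proof (induction b)
  case 0
  have "[:1,1::int:] = [:0,1:] + 1" by (rule poly_eqI) (simp add: coeff_pCons split: nat.split)
  thus ?case by (intro exI[of _ 0]) simp
next
  case (Suc b)
  then obtain R where R: "[:1,1::int:]^(2^b) = [:0,1:]^(2^b) + 1 + smult 2 R" "degree R < 2^b" by blast
  define m where "m = ([:0,1::int:]^(2^b))"
  define R' where "R' = m + smult 2 ((m + 1) * R) + smult 2 (R * R)"
  have dm: "degree m = 2^b" unfolding m_def by (simp add: degree_power_eq)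
  have "[:1,1::int:]^(2^Suc b) = ([:1,1:]^(2^b))^2" by (simp add: power_mult[symmetric] mult.commute)
  also have "\<dots> = (m + 1 + smult 2 R)^2" using R(1) m_def by simp
  also have "\<dots> = m * m + 1 + smult 2 R'"
    unfolding R'_def by (simp add: numeral_mult_conv_smult[symmetric] algebra_simps power2_eq_square)
  also have "m * m = [:0,1:]^(2^Suc b)" unfolding m_def by (simp add: power_add[symmetric] mult_2)
  finally have e: "[:1,1::int:]^(2^Suc b) = [:0,1:]^(2^Suc b) + 1 + smult 2 R'" .
  have pos: "(0::nat) < 2^b" by simp
  have d1: "degree m < 2^Suc b" using dm by simp
  have "degree ((m + 1) * R) \<le> degree (m+1) + degree R" by (rule degree_mult_le)
  moreover have "degree (m+1) \<le> 2^b" using dm degree_add_le[of m "2^b" 1] by simp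
  ultimately have d2: "degree (smult 2 ((m + 1) * R)) < 2^Suc b" using R(2)
    by (metis (no_types, lifting) add_less_le_mono degree_smult_le le_less_trans mult_2 power_Suc add.commute)
  have "degree (R * R) \<le> degree R + degree R" by (rule degree_mult_le)
  hence d3: "degree (smult 2 (R * R)) < 2^Suc b" using R(2)
    by (metis add_strict_mono degree_smult_le le_less_trans mult_2 power_Suc)
  have "degree R' < 2^Suc b" unfolding R'_def using d1 d2 d3 by (intro degree_add_less)
  thus ?case using e by blast
qed

lemma xpow_monom: "[:0,1::'a::comm_semiring_1:]^n = monom 1 n"
  by (simp add: monom_altdef)

lemma g_irred:
  fixes A B :: "int poly"
  assumes gAB: "[:0,1:]^(2^b) + 1 = A * B" and dA: "degree A \<ge> 1" and dB: "degree B \<ge> 1"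
  shows False
proof -
  define N :: nat where "N = 2^b"
  have N1: "N \<ge> 1" unfolding N_def by simp
  obtain R :: "int poly" where R: "[:1,1:]^N = [:0,1:]^N + 1 + smult 2 R" "degree R < N"
    using pow2_struct N_def by blast
  define G where "G = pcompose ([:0,1::int:]^N + 1) [:1,1:]"
  have X1: "pcompose [:0,1::int:] [:1,1:] = [:1,1:]" by (simp add: pcompose_pCons)
  have "G = [:1,1:]^N + 1" unfolding G_def by (simp add: pcompose_add pcompose_pow X1 pcompose_1)
  also have "\<dots> = monom 1 N + smult 2 (R + 1)" using R(1) by (simp add: xpow_monom algebra_simps numeral_mult_conv_smult[symmetric])
  finally have G: "G = monom 1 N + smult 2 (R + 1)" .
  have dR1: "degree (smult 2 (R + 1)) < N"
    using R(2) N1 by (metis degree_add_less degree_1 degree_smult_le le_less_trans less_le_trans zero_less_one)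
  have dG: "degree G = N" unfolding G using dR1 by (subst degree_add_eq_left) (simp_all add: degree_monom_eq)
  have lcG: "lead_coeff G = 1" using dG unfolding G using dR1 R(2) by (simp add: coeff_eq_0)
  have evG: "even (coeff G i)" if "i < degree G" for i using that dG unfolding G by simp
  have "coeff G 0 = poly G 0" by (simp add: poly_0_coeff_0)
  also have "\<dots> = 2" unfolding G_def by (simp add: poly_pcompose)
  finally have c0: "coeff G 0 = 2" .
  have GAB: "G = pcompose A [:1,1:] * pcompose B [:1,1:]" unfolding G_def N_def gAB by (simp add: pcompose_mult)
  show False
    by (rule eisenstein[OF GAB _ _ evG c0 lcG]) (use dA dB in \<open>simp_all add: degree_pcompose\<close>)
qed

lemma irr:
  fixes Q :: "int poly" and z :: complex
  assumes zN: "z ^ (2^b) = -1" and dQ: "degree Q < 2^b" and Qz: "poly (map_poly of_int Q) z = 0"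
  shows "Q = 0"
proof (rule ccontr)
  assume Q0: "Q \<noteq> 0"
  define N :: nat where "N = 2^b"
  have N1: "N \<ge> 1" unfolding N_def by simp
  define P where "P = (\<lambda>d. \<exists>Q::int poly. Q \<noteq> 0 \<and> poly (map_poly of_int Q) z = 0 \<and> degree Q = d)"
  define d0 where "d0 = (LEAST d. P d)"
  have "P (degree Q)" unfolding P_def using Q0 Qz by blast
  hence Pd0: "P d0" and d0le: "d0 \<le> degree Q" unfolding d0_def by (auto intro: LeastI Least_le)
  then obtain Q1 :: "int poly" where Q1: "Q1 \<noteq> 0" "poly (map_poly of_int Q1) z = 0" "degree Q1 = d0"
    unfolding P_def by blast
  define g :: "int poly" where "g = [:0,1:]^N + 1"
  have dg: "degree g = N" unfolding g_def xpow_monom using N1 by (subst degree_add_eq_left) (simp_all add: degree_monom_eq)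
  have g0: "g \<noteq> 0" using dg N1 by auto
  have gz: "poly (map_poly of_int g) z = 0" unfolding g_def using zN N_def by (simp add: mp_add mp_pow mp_X)
  obtain q r where qr: "pseudo_divmod g Q1 = (q, r)" by (cases "pseudo_divmod g Q1")
  define c where "c = coeff Q1 (degree Q1) ^ (Suc (degree g) - degree Q1)"
  have eq: "smult c g = Q1 * q + r" and rdeg: "r = 0 \<or> degree r < degree Q1"
    using pseudo_divmod[OF Q1(1) qr] unfolding c_def by auto
  have c0: "c \<noteq> 0" unfolding c_def using Q1(1) by simp
  have "poly (map_poly of_int (smult c g)) z = poly (map_poly of_int (Q1 * q + r)) z" using eq by simp
  hence rz: "poly (map_poly of_int r) z = 0" using gz Q1(2) by (simp add: mp_add mp_mult mp_smult)
  have r0: "r = 0"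
  proof (rule ccontr)
    assume "r \<noteq> 0"
    hence "P (degree r)" unfolding P_def using rz by blast
    moreover have "degree r < d0" using rdeg \<open>r \<noteq> 0\<close> Q1(3) by simp
    ultimately show False unfolding d0_def using not_less_Least by blast
  qed
  have eq2: "smult c g = Q1 * q" using eq r0 by simp
  have q0: "q \<noteq> 0" using eq2 c0 g0 by auto
  have dQ1: "degree Q1 \<ge> 1"
  proof (rule ccontr)
    assume "\<not> degree Q1 \<ge> 1"
    hence "degree Q1 = 0" by simp
    then obtain a where a: "Q1 = [:a:]" by (elim degree_eq_zeroE)
    thus False using Q1(1,2) by (simp add: map_poly_pCons)
  qed
  have "N = degree Q1 + degree q" using eq2 dg c0 Q1(1) q0 by (metis degree_mult_eq degree_smult_eq)
  moreover have "degree Q1 < N" using Q1(3) d0le dQ N_def by simp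
  ultimately have dq: "degree q \<ge> 1" by simp
  have "content g dvd coeff g N" by simp
  moreover have "coeff g N = 1" unfolding g_def xpow_monom using N1 by simp
  ultimately have "is_unit (content g)" by simp
  hence cg: "content g = 1" by (metis is_unit_normalize normalize_content)
  define u where "u = unit_factor c"
  have uu: "u * u = 1"
  proof -
    have "is_unit u" unfolding u_def using c0 by simp
    hence "\<bar>u\<bar> = 1" using zdvd1_eq by blast
    thus ?thesis by (metis abs_mult_self_eq mult_1)
  qed
  have "primitive_part (smult c g) = primitive_part (Q1 * q)" using eq2 by simp
  hence "smult u g = primitive_part Q1 * primitive_part q"
    unfolding u_def by (simp add: primitive_part_smult primitive_part_mult primitive_part_prim[OF cg])
  hence "smult u (smult u g) = smult u (primitive_part Q1) * primitive_part q" by simp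
  hence gAB: "[:0,1:]^(2^b) + 1 = smult u (primitive_part Q1) * primitive_part q" using uu unfolding g_def N_def by simp
  have u0: "u \<noteq> 0" using uu by auto
  show False
    by (rule g_irred[OF gAB]) (use dQ1 dq u0 in simp_all)
qed

lemma pow2_odd_decomp: "(j::nat) > 0 \<Longrightarrow> \<exists>c j'. j = 2^c * j' \<and> odd j'"
proof (induction j rule: less_induct)
  case (less j)
  show ?case
  proof (cases "odd j")
    case True thus ?thesis by (intro exI[of _ 0] exI[of _ j]) simp
  next
    case False
    then have "even j" by simp
    then obtain h where h: "j = 2 * h" by (elim evenE)
    with less.prems have "h > 0" "h < j" by auto
    then obtain c j' where "h = 2^c * j'" "odd j'" using less.IH by blast
    thus ?thesis using h by (intro exI[of _ "Suc c"] exI[of _ j']) simp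
  qed
qed

lemma cis_eq_1_dvd:
  fixes m t :: nat assumes m: "m > 0" and c: "cis (2 * pi * real t / real m) = 1"
  shows "m dvd t"
proof -
  have "cos (2 * pi * real t / real m) = Re (cis (2 * pi * real t / real m))" by simp
  also have "\<dots> = 1" using c by simp
  finally have "cos (2 * pi * real t / real m) = 1" .
  then obtain q :: int where q: "2 * pi * real t / real m = of_int q * 2 * pi" using cos_one_2pi_int by blast
  hence "real t = of_int q * real m" using m by (simp add: field_simps)
  hence "int t = q * int m" by (metis of_int_eq_iff of_int_mult of_int_of_nat_eq)
  hence "int m dvd int t" by simp
  thus ?thesis by simp
qed

lemma cis_pow: "cis (2 * pi / real m) ^ t = cis (2 * pi * real t / real m)"
proof -
  have "cis (2 * pi / real m) ^ t = cis (real t * (2 * pi / real m))" by (rule DeMoivre)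
  also have "real t * (2 * pi / real m) = 2 * pi * real t / real m" by simp
  finally show ?thesis .
qed

lemma cis_m_dvd: assumes "m > 0" "m dvd t" shows "cis (2 * pi * real t / real m) = 1"
proof -
  obtain q where "t = m * q" using assms by (elim dvdE)
  hence "2 * pi * real t / real m = 2 * pi * real q" using assms by simp
  thus ?thesis by simp
qed

lemma inner_sum:
  fixes N m s :: nat and \<xi> :: complex
  assumes m: "m = 2 * N" and N: "N > 0" and xi: "\<xi> = cis (2 * pi / real m)"
  shows "(\<Sum>i<N. \<xi> ^ ((2*i+1)*s)) = of_nat N * (if m dvd s then 1 else if N dvd s then -1 else 0)"
proof -
  have m0: "m > 0" using m N by simp
  have pw: "\<xi> ^ t = cis (2 * pi * real t / real m)" for t using xi cis_pow by simp
  have p1: "\<xi> ^ t = 1" if "m dvd t" for t by (subst pw) (rule cis_m_dvd[OF m0 that])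
  have "(\<Sum>i<N. \<xi> ^ ((2*i+1)*s)) = (\<Sum>i<N. \<xi>^s * (\<xi>^(2*s))^i)"
    by (intro sum.cong refl) (simp add: power_add power_mult[symmetric] algebra_simps)
  also have "\<dots> = \<xi>^s * (\<Sum>i<N. (\<xi>^(2*s))^i)" by (simp add: sum_distrib_left)
  finally have e: "(\<Sum>i<N. \<xi> ^ ((2*i+1)*s)) = \<xi>^s * (\<Sum>i<N. (\<xi>^(2*s))^i)" .
  show ?thesis
  proof (cases "N dvd s")
    case True
    have "m dvd 2 * s" using True m by simp
    hence x2: "\<xi>^(2*s) = 1" by (rule p1)
    have xs: "\<xi>^s = (if m dvd s then 1 else -1)"
    proof (cases "m dvd s")
      case True thus ?thesis using p1 by simp
    next
      case False
      obtain q where q: "s = N * q" using \<open>N dvd s\<close> by (elim dvdE)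
      have "odd q" using False q m by auto
      have "\<xi>^N = cis (2 * pi * real N / real m)" using pw by simp
      also have "\<dots> = -1" using m N by simp
      finally have "\<xi>^s = (-1)^q" using q by (simp add: power_mult)
      thus ?thesis using \<open>odd q\<close> False by simp
    qed
    show ?thesis using e x2 xs True by simp
  next
    case False
    have nm: "\<not> m dvd s" using False m dvd_mult_right[of 2 N s] by auto
    have x2: "\<xi>^(2*s) \<noteq> 1"
    proof
      assume "\<xi>^(2*s) = 1"
      hence "m dvd 2 * s" using pw[of "2*s"] cis_eq_1_dvd[OF m0] by simp
      thus False using False m by simp
    qed
    have "(\<xi>^(2*s))^N = \<xi>^(m * s)" using m by (simp add: power_mult[symmetric] algebra_simps)
    also have "\<dots> = 1" by (rule p1) simp
    finally have "(\<Sum>i<N. (\<xi>^(2*s))^i) = 0" using geometric_sum[OF x2, of N] by simp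
    thus ?thesis using e False nm by simp
  qed
qed

lemma conj_roots:
  fixes P :: "int poly" and z w :: complex
  assumes z: "z^(2^b) = -1" and w: "w^(2^b) = -1" and Pz: "poly (map_poly of_int P) z = 0"
  shows "poly (map_poly of_int P) w = 0"
proof -
  define N :: nat where "N = 2^b"
  have N1: "N \<ge> 1" unfolding N_def by simp
  define g :: "int poly" where "g = [:0,1:]^N + 1"
  have dg: "degree g = N" unfolding g_def xpow_monom using N1 by (subst degree_add_eq_left) (simp_all add: degree_monom_eq)
  have lg: "coeff g (degree g) = 1" unfolding dg unfolding g_def xpow_monom using N1 by simp
  have g0: "g \<noteq> 0" using lg by auto
  obtain q r where qr: "pseudo_divmod P g = (q, r)" by (cases "pseudo_divmod P g")
  have eq: "P = g * q + r" and rdeg: "r = 0 \<or> degree r < degree g"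
    using pseudo_divmod[OF g0 qr] lg by auto
  have gz: "poly (map_poly of_int g) z = 0" unfolding g_def using z N_def by (simp add: mp_add mp_pow mp_X)
  have gw: "poly (map_poly of_int g) w = 0" unfolding g_def using w N_def by (simp add: mp_add mp_pow mp_X)
  have "poly (map_poly of_int r) z = 0" using Pz gz unfolding eq by (simp add: mp_add mp_mult)
  hence "r = 0" using rdeg dg N_def irr[OF z, of r] by auto
  thus ?thesis using gw unfolding eq by (simp add: mp_mult)
qed

lemma sum_formula:
  fixes m N :: nat and \<xi> lam :: complex and S :: "nat set"
  assumes m: "m = 2 * N" and N: "N > 0" and xi: "\<xi> = cis (2 * pi / real m)" and fin: "finite S"
    and H: "\<And>r. odd r \<Longrightarrow> (\<Sum>s\<in>S. \<xi> ^ (r * s)) = lam"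
  shows "lam = of_nat (card {s\<in>S. m dvd s}) - of_nat (card {s\<in>S. N dvd s \<and> \<not> m dvd s})"
proof -
  define \<chi> :: "nat \<Rightarrow> complex" where "\<chi> s = (if m dvd s then 1 else if N dvd s then -1 else 0)" for s
  have "of_nat N * lam = (\<Sum>i<N. lam)" by simp
  also have "\<dots> = (\<Sum>i<N. \<Sum>s\<in>S. \<xi> ^ ((2*i+1) * s))" by (intro sum.cong refl H[symmetric]) simp
  also have "\<dots> = (\<Sum>s\<in>S. \<Sum>i<N. \<xi> ^ ((2*i+1) * s))" by (rule sum.swap)
  also have "\<dots> = (\<Sum>s\<in>S. of_nat N * \<chi> s)" unfolding \<chi>_def by (intro sum.cong refl inner_sum[OF m N xi])
  also have "\<dots> = of_nat N * (\<Sum>s\<in>S. \<chi> s)" by (simp add: sum_distrib_left)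
  finally have "lam = (\<Sum>s\<in>S. \<chi> s)" using N by simp
  also have "(\<Sum>s\<in>S. \<chi> s) = (\<Sum>s\<in>S. (if m dvd s then 1 else 0)) - (\<Sum>s\<in>S. (if N dvd s \<and> \<not> m dvd s then 1 else 0))"
    unfolding \<chi>_def sum_subtractf[symmetric] by (intro sum.cong refl) auto
  also have "\<dots> = of_nat (card {s\<in>S. m dvd s}) - of_nat (card {s\<in>S. N dvd s \<and> \<not> m dvd s})"
    using fin by (simp add: sum.inter_filter[symmetric])
  finally show ?thesis .
qed

lemma gcd_char:
  fixes s a k :: nat assumes ak: "a < k"
  shows "gcd s (2^k) = 2^a \<longleftrightarrow> 2^a dvd s \<and> \<not> 2^(Suc a) dvd s"
proof
  assume g: "gcd s (2^k) = 2^a"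
  have "2^a dvd s" by (metis g gcd_dvd1)
  moreover have "\<not> 2^(Suc a) dvd s"
  proof
    assume "2^(Suc a) dvd s"
    moreover have "(2::nat)^(Suc a) dvd 2^k" using ak by (intro le_imp_power_dvd) simp
    ultimately have "(2::nat)^(Suc a) dvd 2^a" using g by (metis gcd_greatest)
    hence "(2::nat)^(Suc a) \<le> 2^a" by (intro dvd_imp_le) simp_all
    thus False by simp
  qed
  ultimately show "2^a dvd s \<and> \<not> 2^(Suc a) dvd s" by blast
next
  assume h: "2^a dvd s \<and> \<not> 2^(Suc a) dvd s"
  then obtain t where t: "s = 2^a * t" by (auto elim: dvdE)
  have "odd t" using h t by auto
  hence cop: "coprime t (2^(k-a))" by (simp add: coprime_power_right_iff)
  have "(2::nat)^k = 2^a * 2^(k-a)" using ak by (simp add: power_add[symmetric])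
  hence "gcd s (2^k) = 2^a * gcd t (2^(k-a))" using t by (simp add: gcd_mult_distrib_nat)
  thus "gcd s (2^k) = 2^a" using cop by simp
qed

lemma count_mod4:
  fixes n k :: nat and S :: "nat set"
  assumes n: "n = 2^k" and Ssub: "S \<subseteq> {1..<n}"
    and H: "\<forall>d. d dvd n \<and> d < n \<longrightarrow> card (S \<inter> S_n n d) mod 4 = 0"
  shows "a \<le> k \<Longrightarrow> card {s\<in>S. 2^a dvd s} mod 4 = 0"
proof (induction a rule: inc_induct)
  case base
  have e: "{s\<in>S. 2^k dvd s} = {}"
  proof (rule ccontr)
    assume "{s\<in>S. 2^k dvd s} \<noteq> {}"
    then obtain s where "s \<in> S" "2^k dvd s" by auto
    moreover have "0 < s" "s < 2^k" using \<open>s \<in> S\<close> Ssub n by auto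
    ultimately show False by (meson dvd_imp_le not_le)
  qed
  show ?case unfolding e by simp
next
  case (step a)
  have fin: "finite S" using Ssub finite_subset by blast
  have sd: "2^a dvd x" if "2^(Suc a) dvd x" for x :: nat
    using that by (metis dvd_mult_right power_Suc)
  have eq: "{s\<in>S. 2^a dvd s} = {s\<in>S. 2^(Suc a) dvd s} \<union> (S \<inter> S_n n (2^a))"
    using Ssub n gcd_char[OF step(2)] sd unfolding S_n_def
    by (auto simp del: power_Suc)
  have disj: "{s\<in>S. 2^(Suc a) dvd s} \<inter> (S \<inter> S_n n (2^a)) = {}"
    using gcd_char[OF step(2)] n unfolding S_n_def by auto
  have "card {s\<in>S. 2^a dvd s} = card {s\<in>S. 2^(Suc a) dvd s} + card (S \<inter> S_n n (2^a))"
    unfolding eq using fin disj by (intro card_Un_disjoint) auto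
  moreover have "card (S \<inter> S_n n (2^a)) mod 4 = 0"
    using H n step(2) by (simp add: le_imp_power_dvd)
  ultimately show ?case using step(3) by presburger
qed

lemma poly_P_eval:
  fixes S :: "nat set" and L :: int and w :: complex
  assumes fin: "finite S"
  shows "poly (map_poly of_int ((\<Sum>s\<in>S. monom 1 s) - [:L:])) w = (\<Sum>s\<in>S. w ^ s) - of_int L"
proof -
  have "map_poly (of_int :: int \<Rightarrow> complex) ((\<Sum>s\<in>S. monom 1 s) - [:L:]) = (\<Sum>s\<in>S. monom 1 s) - [:of_int L:]"
  proof (rule poly_eqI)
    fix i
    have e: "(of_int (if P then 1 else 0) :: complex) = (if P then 1 else 0)" for P by simp
    show "coeff (map_poly of_int ((\<Sum>s\<in>S. monom 1 s) - [:L:])) i = coeff ((\<Sum>s\<in>S. monom 1 s) - [:of_int L:] :: complex poly) i"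
      by (simp add: coeff_map_poly coeff_sum of_int_sum e coeff_pCons split: nat.split)
  qed
  thus ?thesis by (simp add: poly_sum poly_monom)
qed

lemma eig_mod4:
  fixes k n j :: nat and S :: "nat set" and L :: int
  assumes n: "n = 2^k" and Ssub: "S \<subseteq> {1..<n}"
    and C: "\<And>a. a \<le> k \<Longrightarrow> card {s\<in>S. 2^a dvd s} mod 4 = 0"
    and j: "j < n" and sumL: "(\<Sum>s\<in>S. cis (2 * pi / real n) ^ (j * s)) = of_int L"
  shows "L mod 4 = 0"
proof (cases "j = 0")
  case True
  hence "of_int L = (of_nat (card S) :: complex)" using sumL by simp
  hence "L = int (card S)" by (metis of_int_eq_iff of_int_of_nat_eq)
  moreover have "card S mod 4 = 0" using C[of 0] by simp
  ultimately show ?thesis by presburger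
next
  case False
  have fin: "finite S" using Ssub finite_subset by blast
  obtain c j' where jc: "j = 2^c * j'" and oj: "odd j'" using pow2_odd_decomp False by blast
  have "2^c \<le> j" using jc oj by (metis dvd_imp_le dvd_triv_left False neq0_conv)
  hence "(2::nat)^c < 2^k" using j n by linarith
  hence ck: "c < k" by simp
  define a where "a = k - c"
  define b where "b = a - 1"
  define N :: nat where "N = 2^b"
  define m :: nat where "m = 2^a"
  have a1: "a \<ge> 1" unfolding a_def using ck by simp
  have mN: "m = 2 * N" unfolding m_def N_def b_def using a1 by (metis Suc_pred' less_le_trans power_Suc zero_less_one)
  have N0: "N > 0" unfolding N_def by simp
  define \<xi> where "\<xi> = cis (2 * pi / real m)"
  have nm: "real n = 2^c * real m" unfolding n m_def a_def using ck by (simp add: power_add[symmetric])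
  have pw: "\<xi> ^ t = cis (2 * pi * real t / real m)" for t unfolding \<xi>_def by (rule cis_pow)
  have xiN: "\<xi> ^ N = -1" unfolding pw using mN N0 by simp
  have xiodd: "(\<xi> ^ r) ^ N = -1" if "odd r" for r
  proof -
    have "(\<xi> ^ r) ^ N = (\<xi> ^ N) ^ r" by (simp add: power_mult[symmetric] mult.commute)
    thus ?thesis using xiN that by simp
  qed
  have conv: "cis (2 * pi / real n) ^ (j * s) = (\<xi> ^ j') ^ s" for s
  proof -
    have "cis (2 * pi / real n) ^ (j * s) = cis (2 * pi * real (j * s) / real n)" by (rule cis_pow)
    also have "2 * pi * real (j * s) / real n = 2 * pi * real (j' * s) / real m"
      unfolding nm jc using m_def by simp
    also have "cis \<dots> = \<xi> ^ (j' * s)" using pw by simp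
    finally show ?thesis by (simp add: power_mult)
  qed
  define P :: "int poly" where "P = (\<Sum>s\<in>S. monom 1 s) - [:L:]"
  have Pz: "poly (map_poly of_int P) (\<xi> ^ j') = 0"
    unfolding P_def poly_P_eval[OF fin] using sumL conv by simp
  have Hr: "(\<Sum>s\<in>S. \<xi> ^ (r * s)) = of_int L" if "odd r" for r
  proof -
    have "poly (map_poly of_int P) (\<xi> ^ r) = 0"
      by (rule conj_roots[OF _ _ Pz, of b]) (use xiodd oj that N_def in auto)
    thus ?thesis unfolding P_def poly_P_eval[OF fin] by (simp add: power_mult)
  qed
  have form: "of_int L = (of_nat (card {s\<in>S. m dvd s}) - of_nat (card {s\<in>S. N dvd s \<and> \<not> m dvd s}) :: complex)"
    by (rule sum_formula[OF mN N0 \<xi>_def fin Hr]) 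
  have sub: "{s\<in>S. m dvd s} \<subseteq> {s\<in>S. N dvd s}" using mN by auto
  have "{s\<in>S. N dvd s \<and> \<not> m dvd s} = {s\<in>S. N dvd s} - {s\<in>S. m dvd s}" by auto
  hence cB: "card {s\<in>S. N dvd s \<and> \<not> m dvd s} = card {s\<in>S. N dvd s} - card {s\<in>S. m dvd s}"
    using sub fin by (simp add: card_Diff_subset)
  have le: "card {s\<in>S. m dvd s} \<le> card {s\<in>S. N dvd s}" using sub fin by (intro card_mono) auto
  have "L = int (card {s\<in>S. m dvd s}) - (int (card {s\<in>S. N dvd s}) - int (card {s\<in>S. m dvd s}))"
  proof -
    have "(of_int L :: complex) = of_int (int (card {s\<in>S. m dvd s}) - (int (card {s\<in>S. N dvd s}) - int (card {s\<in>S. m dvd s})))"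
      using form cB le by (simp add: of_nat_diff)
    thus ?thesis by (simp only: of_int_eq_iff)
  qed
  moreover have "card {s\<in>S. m dvd s} mod 4 = 0" unfolding m_def using C a_def by simp
  moreover have "card {s\<in>S. N dvd s} mod 4 = 0" unfolding N_def using C a_def b_def by simp
  ultimately show ?thesis by presburger
qed

definition mv :: "nat \<Rightarrow> (nat \<Rightarrow> nat \<Rightarrow> complex) \<Rightarrow> (nat \<Rightarrow> complex) \<Rightarrow> nat \<Rightarrow> complex" where
  "mv n M z = (\<lambda>u. \<Sum>w<n. M u w * z w)"

lemma mv_cong: "(\<And>u. u < n \<Longrightarrow> z u = z' u) \<Longrightarrow> mv n M z = mv n M z'"
  unfolding mv_def by (intro ext sum.cong) auto

lemma funpow_cong:
  assumes "\<And>u. u < n \<Longrightarrow> z u = z' u" "u < n"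
  shows "(mv n M ^^ m) z u = (mv n M ^^ m) z' u"
proof (cases m)
  case 0 thus ?thesis using assms by simp
next
  case (Suc m') thus ?thesis using mv_cong[of n z z' M, OF assms(1)] by (simp only: funpow_Suc_right comp_def)
qed

lemma mat_pow_mv: "u < n \<Longrightarrow> mv n (mat_pow n M m) z u = (mv n M ^^ m) z u"
proof (induction m arbitrary: z u)
  case 0
  have "(\<Sum>w<n. (if u = w then 1 else 0) * z w) = (\<Sum>w<n. if u = w then z u else 0)" by (intro sum.cong) auto
  thus ?case using 0 by (simp add: mv_def)
next
  case (Suc m)
  have "mv n (mat_pow n M (Suc m)) z u = (\<Sum>w<n. (\<Sum>v<n. mat_pow n M m u v * M v w) * z w)"
    by (simp add: mv_def mat_mult_def)
  also have "\<dots> = (\<Sum>w<n. \<Sum>v<n. mat_pow n M m u v * (M v w * z w))"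
    by (simp add: sum_distrib_right mult.assoc)
  also have "\<dots> = (\<Sum>v<n. \<Sum>w<n. mat_pow n M m u v * (M v w * z w))"
    by (rule sum.swap)
  also have "\<dots> = (\<Sum>v<n. mat_pow n M m u v * (\<Sum>w<n. M v w * z w))"
    by (simp add: sum_distrib_left)
  also have "\<dots> = mv n (mat_pow n M m) (mv n M z) u" by (simp add: mv_def)
  also have "\<dots> = (mv n M ^^ m) (mv n M z) u" using Suc by simp
  finally show ?case by (simp only: funpow_Suc_right comp_def)
qed

lemma mat_pow_col:
  assumes "u < n" "w < n"
  shows "mat_pow n M m u w = (mv n M ^^ m) (\<lambda>v. if v = w then 1 else 0) u"
proof -
  have "(\<Sum>v<n. mat_pow n M m u v * (if v = w then 1 else 0)) = (\<Sum>v<n. if v = w then mat_pow n M m u w else 0)"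
    by (intro sum.cong) auto
  hence "mat_pow n M m u w = mv n (mat_pow n M m) (\<lambda>v. if v = w then 1 else 0) u"
    using assms(2) by (simp add: mv_def)
  thus ?thesis using mat_pow_mv[OF assms(1)] by simp
qed

lemma expand:
  fixes J :: "'j set"
  assumes fin: "finite J" and eig: "\<And>j u. j \<in> J \<Longrightarrow> u < n \<Longrightarrow> mv n M (g j) u = c j * g j u"
  shows "(\<And>u. u < n \<Longrightarrow> z u = (\<Sum>j\<in>J. a j * g j u)) \<Longrightarrow> u < n \<Longrightarrow>
         (mv n M ^^ m) z u = (\<Sum>j\<in>J. a j * c j ^ m * g j u)"
proof (induction m arbitrary: z a u)
  case 0 thus ?case by simp
next
  case (Suc m)
  have "mv n M z u' = (\<Sum>j\<in>J. (a j * c j) * g j u')" if "u' < n" for u'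
  proof -
    have "mv n M z u' = (\<Sum>w<n. M u' w * (\<Sum>j\<in>J. a j * g j w))" unfolding mv_def using Suc.prems by simp
    also have "\<dots> = (\<Sum>w<n. \<Sum>j\<in>J. a j * (M u' w * g j w))"
      by (simp add: sum_distrib_left algebra_simps)
    also have "\<dots> = (\<Sum>j\<in>J. \<Sum>w<n. a j * (M u' w * g j w))"
      by (rule sum.swap)
    also have "\<dots> = (\<Sum>j\<in>J. a j * mv n M (g j) u')"
      unfolding mv_def by (simp add: sum_distrib_left)
    also have "\<dots> = (\<Sum>j\<in>J. (a j * c j) * g j u')" using eig that by (simp add: algebra_simps)
    finally show ?thesis .
  qed
  hence "(mv n M ^^ m) (mv n M z) u = (\<Sum>j\<in>J. (a j * c j) * c j ^ m * g j u)"
    using Suc.IH[of "mv n M z" "\<lambda>j. a j * c j"] Suc.prems by blast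
  thus ?case by (simp only: funpow_Suc_right comp_def) (simp add: algebra_simps)
qed

lemma funpow_lin:
  "(\<And>u. u < n \<Longrightarrow> z u = \<alpha> * p u + \<beta> * q u) \<Longrightarrow> u < n \<Longrightarrow>
   (mv n M ^^ m) z u = \<alpha> * (mv n M ^^ m) p u + \<beta> * (mv n M ^^ m) q u"
proof (induction m arbitrary: z p q u)
  case 0 thus ?case by simp
next
  case (Suc m)
  have "mv n M z u' = \<alpha> * mv n M p u' + \<beta> * mv n M q u'" for u'
    unfolding mv_def using Suc.prems by (simp add: sum_distrib_left sum.distrib algebra_simps)
  hence "(mv n M ^^ m) (mv n M z) u = \<alpha> * (mv n M ^^ m) (mv n M p) u + \<beta> * (mv n M ^^ m) (mv n M q) u"
    using Suc.IH Suc.prems by blast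
  thus ?case by (simp only: funpow_Suc_right comp_def)
qed

lemma funpow_inv:
  assumes inv: "\<And>z. P z \<Longrightarrow> P (mv n M z)"
    and same: "\<And>z u. P z \<Longrightarrow> u < n \<Longrightarrow> mv n M' z u = mv n M z u"
  shows "P z \<Longrightarrow> u < n \<Longrightarrow> (mv n M' ^^ m) z u = (mv n M ^^ m) z u"
proof (induction m arbitrary: z u)
  case 0 thus ?case by simp
next
  case (Suc m)
  have "(mv n M' ^^ m) (mv n M' z) u = (mv n M' ^^ m) (mv n M z) u"
    by (rule funpow_cong) (use same Suc.prems in auto)
  also have "\<dots> = (mv n M ^^ m) (mv n M z) u" using Suc.IH inv Suc.prems by blast
  finally show ?case by (simp only: funpow_Suc_right comp_def)
qed

lemma exp_series:
  fixes J :: "'j set" and b c :: "'j \<Rightarrow> complex"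
  assumes fin: "finite J"
  shows "(\<lambda>m. (\<Sum>j\<in>J. b j * c j ^ m) / of_nat (fact m)) sums (\<Sum>j\<in>J. b j * exp (c j))"
proof -
  have "(\<lambda>m. b j * (c j ^ m /\<^sub>R fact m)) sums (b j * exp (c j))" for j
    by (intro sums_mult exp_converges)
  hence "(\<lambda>m. \<Sum>j\<in>J. b j * (c j ^ m /\<^sub>R fact m)) sums (\<Sum>j\<in>J. b j * exp (c j))"
    by (intro sums_sum) 
  moreover have "(\<Sum>j\<in>J. b j * (c j ^ m /\<^sub>R fact m)) = (\<Sum>j\<in>J. b j * c j ^ m) / of_nat (fact m)" for m
  proof -
    have "(\<Sum>j\<in>J. b j * c j ^ m) / of_nat (fact m) = (\<Sum>j\<in>J. b j * c j ^ m / of_nat (fact m))"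
      by (simp add: sum_divide_distrib)
    also have "\<dots> = (\<Sum>j\<in>J. b j * (c j ^ m /\<^sub>R fact m))"
      by (intro sum.cong refl) (simp add: scaleR_conv_of_real divide_inverse)
    finally show ?thesis by simp
  qed
  ultimately show ?thesis by simp
qed

lemma nat_sub_mod: assumes "b \<le> n" "n > 0"
  shows "(a + n - b) mod n = nat ((int a - int b) mod int n)"
proof -
  have "int ((a + n - b) mod n) = (int a + int n - int b) mod int n" using assms by (simp add: zmod_int of_nat_diff)
  also have "\<dots> = ((int a - int b) + int n) mod int n" by (simp add: algebra_simps)
  also have "\<dots> = (int a - int b) mod int n" by (rule mod_add_self2)
  finally show ?thesis by (metis nat_int)
qed

definition Qm :: "nat \<Rightarrow> nat set \<Rightarrow> int \<Rightarrow> bool" where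
  "Qm n S z \<longleftrightarrow> nat (z mod int n) \<in> S"

lemma Qm_mod: "z mod int n = z' mod int n \<Longrightarrow> Qm n S z = Qm n S z'"
  unfolding Qm_def by simp

lemma adj_Qm: "b < n \<Longrightarrow> cay_adj n S a b \<longleftrightarrow> Qm n S (int a - int b)"
  unfolding cay_adj_def Qm_def using nat_sub_mod[of b n a] by simp

lemma Qm_neg: assumes cs: "conn_set n S" and n: "n > 0" and q: "Qm n S z" shows "Qm n S (-z)"
proof -
  define s where "s = nat (z mod int n)"
  have sS: "s \<in> S" using q unfolding Qm_def s_def .
  have ss: "int s = z mod int n" unfolding s_def using n by simp
  have "(n - s) mod n \<in> S" using cs sS unfolding conn_set_def by blast
  moreover have "(n - s) mod n = nat ((- z) mod int n)"
  proof -
    have "z mod int n < int n" using n by simp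
    hence sn: "s \<le> n" using ss by linarith
    have "int ((n - s) mod n) = (int n - int s) mod int n" using sn by (simp add: zmod_int of_nat_diff)
    also have "\<dots> = (int n - z) mod int n" unfolding ss by (simp add: mod_simps)
    also have "\<dots> = ((- z) + int n) mod int n" by (simp add: algebra_simps)
    also have "\<dots> = (- z) mod int n" by (rule mod_add_self2)
    finally show ?thesis by (metis nat_int)
  qed
  ultimately show ?thesis unfolding Qm_def by simp
qed

lemma Qm_half:
  assumes cs: "conn_set n S" and n: "n = 2 * h" "h > 0" and hm: "S = half_minus n S" and q: "Qm n S z"
  shows "Qm n S (z + int h)"
proof -
  have n0: "n > 0" using n by simp
  define s where "s = nat (z mod int n)"
  have sS: "s \<in> S" using q unfolding Qm_def s_def .
  have ss: "int s = z mod int n" unfolding s_def using n0 by simp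
  have "z mod int n < int n" using n0 by simp
  hence sn: "s \<le> n" using ss by linarith
  have "(n div 2 + n - s) mod n \<in> S" using sS hm unfolding half_minus_def by blast
  moreover have "n div 2 = h" using n by simp
  moreover have "(h + n - s) mod n = nat ((int h - z) mod int n)"
  proof -
    have "int ((h + n - s) mod n) = (int h + int n - int s) mod int n" using sn by (simp add: zmod_int of_nat_diff)
    also have "\<dots> = (int h + int n - z) mod int n" unfolding ss by (simp add: mod_simps)
    also have "\<dots> = ((int h - z) + int n) mod int n" by (simp add: algebra_simps)
    also have "\<dots> = (int h - z) mod int n" by (rule mod_add_self2)
    finally show ?thesis by (metis nat_int)
  qed
  ultimately have "Qm n S (int h - z)" unfolding Qm_def by simp
  hence "Qm n S (- (int h - z))" by (rule Qm_neg[OF cs n0])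
  moreover have "(- (int h - z)) mod int n = (z + int h) mod int n"
  proof -
    have "z + int h = (- (int h - z)) + int n" using n by simp
    hence "(z + int h) mod int n = ((- (int h - z)) + int n) mod int n" by (rule arg_cong)
    thus ?thesis by (metis mod_add_self2)
  qed
  ultimately show ?thesis using Qm_mod by blast
qed

lemma Qm_half_iff:
  assumes cs: "conn_set n S" and n: "n = 2 * h" "h > 0" and hm: "S = half_minus n S"
  shows "Qm n S (z + int h) \<longleftrightarrow> Qm n S z"
proof
  assume "Qm n S (z + int h)"
  hence "Qm n S (z + int h + int h)" by (rule Qm_half[OF cs n hm])
  moreover have "(z + int h + int h) mod int n = z mod int n" using n by simp
  ultimately show "Qm n S z" using Qm_mod by blast
qed (rule Qm_half[OF cs n hm])

lemma Qm_zero: "conn_set n S \<Longrightarrow> \<not> Qm n S 0"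
  unfolding Qm_def conn_set_def by simp

lemma row_xy:
  assumes cs: "conn_set n S" and n: "n = 2 * h" "h > 0" and hm: "S = half_minus n S"
    and x: "x < n" and y: "y = (x + h) mod n" and w: "w < n"
  shows "cay_adj n S x w \<longleftrightarrow> cay_adj n S y w"
proof -
  have "(int y - int w) mod int n = ((int x - int w) + int h) mod int n"
    unfolding y using n by (simp add: zmod_int mod_simps algebra_simps)
  hence "Qm n S (int y - int w) = Qm n S ((int x - int w) + int h)" by (rule Qm_mod)
  also have "\<dots> = Qm n S (int x - int w)" by (rule Qm_half_iff[OF cs n hm])
  finally show ?thesis using adj_Qm[OF w] by simp
qed

lemma col_xy:
  assumes cs: "conn_set n S" and n: "n = 2 * h" "h > 0" and hm: "S = half_minus n S"
    and x: "x < n" and y: "y = (x + h) mod n"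
  shows "cay_adj n S u x \<longleftrightarrow> cay_adj n S u y"
proof -
  have yn: "y < n" unfolding y using n by simp
  have "(int u - int y) mod int n = (int u - int x - int h) mod int n"
    unfolding y using n by (simp add: zmod_int mod_simps algebra_simps)
  hence "Qm n S (int u - int y) = Qm n S (int u - int x - int h)" by (rule Qm_mod)
  also have "\<dots> = Qm n S ((int u - int x - int h) + int h)" by (rule Qm_half_iff[OF cs n hm, symmetric])
  finally show ?thesis using adj_Qm[OF x] adj_Qm[OF yn] by simp
qed

lemma xy_ne:
  fixes n h x y :: nat
  assumes n: "n = 2 * h" "h > 0" and x: "x < n" and y: "y = (x + h) mod n"
  shows "y \<noteq> x"
proof
  assume "y = x"
  show False
  proof (cases "x + h < n")
    case True thus False using \<open>y = x\<close> y n by simp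
  next
    case False
    hence "y = x + h - n" unfolding y using x n by (simp add: mod_if)
    thus False using \<open>y = x\<close> x n False by linarith
  qed
qed

lemma not_adj_self: "conn_set n S \<Longrightarrow> x < n \<Longrightarrow> \<not> cay_adj n S x x"
  using adj_Qm Qm_zero by simp

lemma phi_inv: fixes n w u :: nat assumes "n > 0" "w < n" shows "(u + n - (u + n - w) mod n) mod n = w"
proof -
  have p: "(u + n - w) mod n < n" using assms(1) by (rule mod_less_divisor)
  have "int ((u + n - (u + n - w) mod n) mod n) = (int u + int n - int ((u + n - w) mod n)) mod int n"
    using p by (simp add: zmod_int of_nat_diff)
  also have "\<dots> = (int u + int n - (int u + int n - int w) mod int n) mod int n"
    using assms by (simp add: zmod_int of_nat_diff)
  also have "\<dots> = (int u + int n - (int u + int n - int w)) mod int n" by (simp add: mod_simps)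
  also have "\<dots> = int w" using assms by simp
  finally show ?thesis by (metis nat_int)
qed

lemma adj_reindex:
  assumes Ssub: "S \<subseteq> {..<n}" and n: "n > 0"
  shows "(\<Sum>w<n. (if cay_adj n S u w then F w else 0)) = (\<Sum>s\<in>S. F ((u + n - s) mod n))"
proof -
  have "(\<Sum>w<n. (if cay_adj n S u w then F w else 0)) = (\<Sum>s<n. (if s \<in> S then F ((u + n - s) mod n) else 0))"
  proof (rule sum.reindex_bij_witness[of _ "\<lambda>s. (u + n - s) mod n" "\<lambda>w. (u + n - w) mod n"])
    show "\<And>a. a \<in> {..<n} \<Longrightarrow> (u + n - (u + n - a) mod n) mod n = a" using phi_inv[OF n] by auto
    show "\<And>a. a \<in> {..<n} \<Longrightarrow> (u + n - a) mod n \<in> {..<n}" using n by auto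
    show "\<And>a. a \<in> {..<n} \<Longrightarrow> (u + n - (u + n - a) mod n) mod n = a" using phi_inv[OF n] by auto
    show "\<And>a. a \<in> {..<n} \<Longrightarrow> (u + n - a) mod n \<in> {..<n}" using n by auto
    show "\<And>a. a \<in> {..<n} \<Longrightarrow>
      (if (u + n - a) mod n \<in> S then F ((u + n - (u + n - a) mod n) mod n) else 0) = (if cay_adj n S u a then F a else 0)"
      using phi_inv[OF n] unfolding cay_adj_def by auto
  qed
  also have "\<dots> = (\<Sum>s\<in>S. F ((u + n - s) mod n))"
  proof -
    have "{s. s < n \<and> s \<in> S} = S" using Ssub by auto
    thus ?thesis using Ssub by (simp add: sum.inter_filter[symmetric])
  qed
  finally show ?thesis .
qed

lemma om_n: "(n::nat) > 0 \<Longrightarrow> cis (2 * pi / real n) ^ n = 1"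
  using cis_pow[of n n] by simp

lemma pow_mod_eq: "(z::complex) ^ n = 1 \<Longrightarrow> z ^ a = z ^ (a mod n)"
proof -
  assume z: "z ^ n = 1"
  have "z ^ a = z ^ (n * (a div n) + a mod n)" by simp
  also have "\<dots> = (z ^ n) ^ (a div n) * z ^ (a mod n)" by (simp only: power_add power_mult)
  also have "\<dots> = z ^ (a mod n)" using z by simp
  finally show ?thesis .
qed

lemma eigA:
  assumes cs: "conn_set n S" and n: "n > 0"
  shows "mv n (cay_adjmat n S) (\<lambda>w. (cis (2 * pi / real n) ^ j) ^ w) u
         = (\<Sum>s\<in>S. (cis (2 * pi / real n) ^ j) ^ s) * (cis (2 * pi / real n) ^ j) ^ u"
proof -
  define z where "z = cis (2 * pi / real n) ^ j"
  have "z ^ n = (cis (2 * pi / real n) ^ n) ^ j" unfolding z_def by (simp only: power_mult[symmetric] mult.commute)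
  hence zn: "z ^ n = 1" using om_n[OF n] by simp
  have Ssub: "S \<subseteq> {..<n}" using cs unfolding conn_set_def by auto
  have S0: "0 \<notin> S" using cs unfolding conn_set_def by auto
  have "mv n (cay_adjmat n S) (\<lambda>w. z ^ w) u = (\<Sum>w<n. (if cay_adj n S u w then z ^ w else 0))"
    unfolding mv_def cay_adjmat_def by (intro sum.cong) auto
  also have "\<dots> = (\<Sum>s\<in>S. z ^ ((u + n - s) mod n))" by (rule adj_reindex[OF Ssub n])
  also have "\<dots> = (\<Sum>s\<in>S. z ^ u * z ^ (n - s))"
  proof (intro sum.cong refl)
    fix s assume "s \<in> S"
    hence "s \<le> n" using Ssub by auto
    hence "u + n - s = u + (n - s)" by simp
    thus "z ^ ((u + n - s) mod n) = z ^ u * z ^ (n - s)" using pow_mod_eq[OF zn, of "u + n - s"] by (simp add: power_add)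
  qed
  also have "\<dots> = z ^ u * (\<Sum>s\<in>S. z ^ (n - s))" by (simp add: sum_distrib_left)
  also have "(\<Sum>s\<in>S. z ^ (n - s)) = (\<Sum>s\<in>S. z ^ s)"
  proof -
    have A: "n - (n - s) = s" if "s \<in> S" for s using that Ssub by auto
    have B: "n - s \<in> S" if s: "s \<in> S" for s
    proof -
      have s1: "0 < s" "s < n" using s Ssub S0 by (auto intro: gr0I)
      have "(n - s) mod n \<in> S" using cs s unfolding conn_set_def by blast
      thus "n - s \<in> S" using s1 by simp
    qed
    show ?thesis by (rule sum.reindex_bij_witness[of _ "\<lambda>s. n - s" "\<lambda>s. n - s"]) (use A B in auto)
  qed
  finally show ?thesis unfolding z_def by (simp add: mult.commute)
qed

lemma fourier:
  assumes n: "n > 0" and u: "u < n" and w: "w < n"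
  shows "(if u = w then 1 else 0) = (\<Sum>j<n. (cis (2 * pi / real n) ^ j) ^ (n - w) / of_nat n * (cis (2 * pi / real n) ^ j) ^ u)"
proof -
  define \<omega> where "\<omega> = cis (2 * pi / real n)"
  define t where "t = n - w + u"
  have "(\<Sum>j<n. (\<omega> ^ j) ^ (n - w) / of_nat n * (\<omega> ^ j) ^ u) = (\<Sum>j<n. (\<omega> ^ t) ^ j) / of_nat n"
  proof -
    have e: "(\<omega> ^ j) ^ (n - w) / of_nat n * (\<omega> ^ j) ^ u = (\<omega> ^ t) ^ j / of_nat n" for j
    proof -
      have "(\<omega> ^ j) ^ (n - w) * (\<omega> ^ j) ^ u = (\<omega> ^ j) ^ t" unfolding t_def by (simp only: power_add)
      also have "\<dots> = (\<omega> ^ t) ^ j" by (simp only: power_mult[symmetric] mult.commute)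
      finally have "(\<omega> ^ j) ^ (n - w) * (\<omega> ^ j) ^ u = (\<omega> ^ t) ^ j" .
      thus ?thesis by (metis times_divide_eq_left mult.commute)
    qed
    show ?thesis unfolding e by (simp add: sum_divide_distrib)
  qed
  also have "(\<Sum>j<n. (\<omega> ^ t) ^ j) = (if u = w then of_nat n else 0)"
  proof (cases "u = w")
    case True
    hence "\<omega> ^ t = 1" unfolding t_def \<omega>_def using om_n[OF n] w by simp
    thus ?thesis using True by simp
  next
    case False
    have "\<omega> ^ t \<noteq> 1"
    proof
      assume "\<omega> ^ t = 1"
      hence "n dvd t" unfolding \<omega>_def cis_pow using cis_eq_1_dvd[OF n] by simp
      moreover have "0 < t" "t < 2 * n" "t \<noteq> n" unfolding t_def using u w False by auto
      ultimately obtain q where q: "t = n * q" "0 < n * q" "n * q < n * 2" "n * q \<noteq> n"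
        by (auto elim!: dvdE simp: mult.commute)
      have "0 < q" "q < 2" using q(2,3) n by simp_all
      hence "q = 1" by simp
      thus False using q(4) by simp
    qed
    moreover have "(\<omega> ^ t) ^ n = (\<omega> ^ n) ^ t" by (simp only: power_mult[symmetric] mult.commute)
    hence "(\<omega> ^ t) ^ n = 1" unfolding \<omega>_def using om_n[OF n] by simp
    ultimately show ?thesis using geometric_sum[of "\<omega> ^ t" n] False by simp
  qed
  finally show ?thesis unfolding \<omega>_def using n by simp
qed

lemma mvlap: "u < n \<Longrightarrow> mv n (laplacian n A) z u = (\<Sum>w<n. A u w) * z u - mv n A z u"
proof -
  assume u: "u < n"
  have "mv n (laplacian n A) z u = (\<Sum>w<n. (if u = w then (\<Sum>w<n. A u w) * z w else 0) - A u w * z w)"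
    unfolding mv_def laplacian_def by (intro sum.cong refl) (simp add: algebra_simps)
  also have "\<dots> = (\<Sum>w<n. (if u = w then (\<Sum>w<n. A u w) * z w else 0)) - mv n A z u"
    unfolding mv_def by (rule sum_subtractf)
  also have "(\<Sum>w<n. (if u = w then (\<Sum>w<n. A u w) * z w else 0)) = (\<Sum>w<n. A u w) * z u"
    using u by (simp add: sum.delta)
  finally show ?thesis .
qed

lemma mvscale: "mv n (\<lambda>u v. c * B u v) z u = c * mv n B z u"
  unfolding mv_def by (simp add: sum_distrib_left mult.assoc)

lemma edge_sum:
  fixes z :: "nat \<Rightarrow> complex"
  assumes xy: "x \<noteq> y" "x < n" "y < n"
  shows "(\<Sum>w<n. (if (u = x \<and> w = y) \<or> (u = y \<and> w = x) then 1 else 0) * z w)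
     = (if u = x then z y else 0) + (if u = y then z x else 0)"
proof (cases "u = x")
  case True
  hence "(\<Sum>w<n. (if (u = x \<and> w = y) \<or> (u = y \<and> w = x) then 1 else 0) * z w) = (\<Sum>w<n. if w = y then z y else 0)"
    using xy by (intro sum.cong) auto
  thus ?thesis using True xy by simp
next
  case False
  show ?thesis
  proof (cases "u = y")
    case True
    hence "(\<Sum>w<n. (if (u = x \<and> w = y) \<or> (u = y \<and> w = x) then 1 else 0) * z w) = (\<Sum>w<n. if w = x then z x else 0)"
      using xy False by (intro sum.cong) auto
    thus ?thesis using True xy False by simp
  next
    case False2: False
    thus ?thesis using False by simp
  qed
qed

lemma mvlap_edge:
  fixes z :: "nat \<Rightarrow> complex"
  assumes xy: "x \<noteq> y" "x < n" "y < n" and u: "u < n"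
  shows "mv n (laplacian n (add_edge A x y)) z u
       = mv n (laplacian n A) z u + ((if u = x then 1 else 0) - (if u = y then 1 else 0)) * (z x - z y)"
proof -
  have d: "(\<Sum>w<n. add_edge A x y u w) = (\<Sum>w<n. A u w) + (if u = x then 1 else 0) + (if u = y then 1 else 0)"
    using edge_sum[OF xy, of u "\<lambda>_. 1"] unfolding add_edge_def by (simp add: sum.distrib)
  have m: "mv n (add_edge A x y) z u = mv n A z u + ((if u = x then z y else 0) + (if u = y then z x else 0))"
    using edge_sum[OF xy, of u z] unfolding add_edge_def mv_def by (simp add: sum.distrib algebra_simps)
  show ?thesis unfolding mvlap[OF u] d m using xy by (auto simp: algebra_simps)
qed

lemma exp_4q: "exp (- (\<i> * complex_of_real (pi / 2)) * of_int (4 * q)) = 1"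
proof -
  have "- (\<i> * complex_of_real (pi / 2)) * of_int (4 * q) = \<i> * complex_of_real (2 * pi * of_int (- q))"
    by (simp add: algebra_simps)
  hence "exp (- (\<i> * complex_of_real (pi / 2)) * of_int (4 * q)) = cis (2 * pi * of_int (- q))"
    unfolding cis_conv_exp by (simp only:)
  thus ?thesis by (metis cis_multiple_2pi Ints_of_int)
qed

lemma exp_4q2: "exp (- (\<i> * complex_of_real (pi / 2)) * (of_int (4 * q) + 2)) = -1"
proof -
  have E: "- (\<i> * complex_of_real (pi / 2)) * (of_int (4 * q) + 2) = - (\<i> * complex_of_real (pi / 2)) * of_int (4 * q) + (- (\<i> * pi))"
    by (simp add: algebra_simps)
  have "exp (- (\<i> * complex_of_real (pi / 2)) * (of_int (4 * q) + 2)) = exp (- (\<i> * complex_of_real (pi / 2)) * of_int (4 * q)) * exp (- (\<i> * pi))"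
    unfolding E by (rule exp_add)
  also have "exp (- (\<i> * pi)) = -1"
  proof -
    have "cis (-pi) = -1" using cis_inverse[of pi] by simp
    moreover have "exp (- (\<i> * pi)) = cis (-pi)" by (simp add: cis_conv_exp)
    ultimately show ?thesis by simp
  qed
  finally show ?thesis using exp_4q by simp
qed

theorem corollary3p5:
  fixes k n :: nat and S :: "nat set" and x :: nat
  assumes "k \<ge> 1" and "n = 2 ^ k"
    and "conn_set n S"
    and "integral_graph n (cay_adjmat n S)"
    and "S = half_minus n S"
    and "\<forall>d. d dvd n \<and> d < n \<longrightarrow> card (S \<inter> S_n n d) mod 4 = 0"
    and "x < n"
  shows "twins n (cay_adj n S) x ((x + n div 2) mod n)
    \<and> lap_PST n (add_edge (cay_adjmat n S) x ((x + n div 2) mod n)) x ((x + n div 2) mod n) (pi / 2)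
    \<and> (\<forall>w<n. w \<noteq> x \<and> w \<noteq> (x + n div 2) mod n \<longrightarrow>
         lap_periodic n (add_edge (cay_adjmat n S) x ((x + n div 2) mod n)) w (pi / 2))"
proof -
  note cs = assms(3) and hm = assms(5) and xn = assms(7)
  define h where "h = n div 2"
  have n2: "n = 2 * h" "h > 0"
  proof -
    obtain k' where "k = Suc k'" using assms(1) by (cases k) auto
    hence "n = 2 * 2^k'" using assms(2) by simp
    thus "n = 2 * h" "h > 0" unfolding h_def by simp_all
  qed
  have n0: "n > 0" using n2 by simp
  define y where "y = (x + n div 2) mod n"
  have yh: "y = (x + h) mod n" unfolding y_def h_def ..
  have yn: "y < n" unfolding y_def using n0 by simp
  have xy: "x \<noteq> y" using xy_ne[OF n2 xn yh] by simp
  have Ssub: "S \<subseteq> {..<n}" and S0: "0 \<notin> S" using cs unfolding conn_set_def by auto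
  have Ssub1: "S \<subseteq> {1..<n}"
  proof
    fix s assume "s \<in> S"
    hence "s < n" using Ssub by auto
    have "s \<noteq> 0" using \<open>s \<in> S\<close> S0 by metis
    thus "s \<in> {1..<n}" using \<open>s < n\<close> by simp
  qed
  have C: "card {s\<in>S. 2^a dvd s} mod 4 = 0" if "a \<le> k" for a
    by (rule count_mod4[OF assms(2) Ssub1 assms(6) that])
  have "card S mod 4 = 0" using C[of 0] by simp
  then obtain c0 where c0: "card S = 4 * c0" by (metis dvd_def mod_0_imp_dvd)
  define A where "A = cay_adjmat n S"
  define \<omega> where "\<omega> = cis (2 * pi / real n)"
  define f where "f j w = (\<omega> ^ j) ^ w" for j w :: nat
  define lam where "lam j = (\<Sum>s\<in>S. (\<omega> ^ j) ^ s)" for j :: nat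
  have eigA': "mv n A (f j) u = lam j * f j u" for j u
    unfolding A_def f_def lam_def \<omega>_def using eigA[OF cs n0] by simp
  have deg: "(\<Sum>w<n. A u w) = of_nat (card S)" for u
  proof -
    have "mv n A (f 0) u = (\<Sum>w<n. A u w)" unfolding mv_def f_def by simp
    moreover have "lam 0 = of_nat (card S)" unfolding lam_def by simp
    ultimately show ?thesis using eigA'[of 0 u] unfolding f_def by simp
  qed
  have lamint: "\<exists>q. lam j = of_int (4 * q)" if j: "j < n" for j
  proof -
    have "is_eigenvalue n (cay_adjmat n S) (lam j)"
      unfolding is_eigenvalue_def
    proof (intro exI[of _ "f j"] conjI allI impI)
      show "\<exists>w<n. f j w \<noteq> 0" using n0 unfolding f_def \<omega>_def by (intro exI[of _ 0]) simp
      fix u assume "u < n"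
      show "(\<Sum>w<n. cay_adjmat n S u w * f j w) = lam j * f j u" using eigA'[of j u] unfolding mv_def A_def .
    qed
    hence "lam j \<in> \<int>" using assms(4) unfolding integral_graph_def by blast
    then obtain L where L: "lam j = of_int L" by (elim Ints_cases)
    have "(\<Sum>s\<in>S. cis (2 * pi / real n) ^ (j * s)) = of_int L"
      using L unfolding lam_def \<omega>_def by (simp add: power_mult)
    hence "L mod 4 = 0" by (intro eig_mod4[OF assms(2) Ssub1, of j L]) (use C j in auto)
    then obtain q where "L = 4 * q" by (metis dvd_def mod_0_imp_dvd)
    thus ?thesis using L by blast
  qed
  define c where "c = - (\<i> * complex_of_real (pi / 2))"
  define M where "M = (\<lambda>u v. c * laplacian n A u v)"
  define \<nu> where "\<nu> j = c * (of_nat (card S) - lam j)" for j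
  have mvM: "mv n M z u = c * (of_nat (card S) * z u - mv n A z u)" if "u < n" for z u
    unfolding M_def mvscale mvlap[OF that] deg ..
  have eigM: "mv n M (f j) u = \<nu> j * f j u" if "j \<in> {..<n}" "u < n" for j u
    unfolding mvM[OF that(2)] eigA' \<nu>_def by (simp add: algebra_simps)
  have exp\<nu>: "exp (\<nu> j) = 1" if jn: "j < n" for j
  proof -
    obtain q where q: "lam j = of_int (4 * q)" using lamint[OF jn] by blast
    have E: "of_nat (card S) - lam j = of_int (4 * (int c0 - q))" using q c0 by simp
    show ?thesis unfolding \<nu>_def c_def E by (rule exp_4q)
  qed
  define a where "a w j = (\<omega> ^ j) ^ (n - w) / of_nat n" for w j :: nat
  have four: "(if u = w then 1 else 0) = (\<Sum>j<n. a w j * f j u)" if "u < n" "w < n" for u w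
    unfolding a_def f_def \<omega>_def using fourier[OF n0 that] by simp
  have colG: "(mv n M ^^ m) z u = (\<Sum>j<n. b j * \<nu> j ^ m * f j u)"
    if "\<And>u. u < n \<Longrightarrow> z u = (\<Sum>j<n. b j * f j u)" "u < n" for z b u m
    by (rule expand[of "{..<n}" n M f \<nu> z b u m]) (use eigM that in auto)
  define A' where "A' = add_edge A x y"
  define M' where "M' = (\<lambda>u v. c * laplacian n A' u v)"
  define P where "P z = (z x = z y)" for z :: "nat \<Rightarrow> complex"
  have same: "mv n M' z u = mv n M z u" if "P z" "u < n" for z u
    using that unfolding M'_def M_def mvscale A'_def P_def mvlap_edge[OF xy xn yn that(2)] by simp
  have rowA: "A x w = A y w" if "w < n" for w
    unfolding A_def cay_adjmat_def using row_xy[OF cs n2 hm xn yh that] by simp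
  have inv: "P (mv n M z)" if "P z" for z
  proof -
    have "mv n A z x = mv n A z y" unfolding mv_def using rowA by (intro sum.cong) auto
    thus ?thesis using that unfolding P_def mvM[OF xn] mvM[OF yn] by simp
  qed
  have exp_col: "(\<lambda>m. (\<Sum>j<n. b j * \<nu> j ^ m * f j u) / of_nat (fact m)) sums (\<Sum>j<n. b j * f j u)" for b u
  proof -
    have "(\<lambda>m. (\<Sum>j<n. (b j * f j u) * \<nu> j ^ m) / of_nat (fact m)) sums (\<Sum>j<n. (b j * f j u) * exp (\<nu> j))"
      by (rule exp_series) simp
    moreover have "(\<Sum>j<n. (b j * f j u) * exp (\<nu> j)) = (\<Sum>j<n. b j * f j u)" using exp\<nu> by simp
    moreover have "(\<Sum>j<n. (b j * f j u) * \<nu> j ^ m) = (\<Sum>j<n. b j * \<nu> j ^ m * f j u)" for m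
      by (simp add: algebra_simps)
    ultimately show ?thesis by simp
  qed
  have UL: "U_L n A' (pi / 2) u w = (\<Sum>m. mat_pow n M' m u w / of_nat (fact m))" for u w
    unfolding U_L_def mat_exp_def M'_def c_def ..
  have per: "U_L n A' (pi / 2) u w = (if u = w then 1 else 0)" if w: "w < n" "w \<noteq> x" "w \<noteq> y" and u: "u < n" for u w
  proof -
    define e where "e = (\<lambda>v::nat. if v = w then (1::complex) else 0)"
    have "mat_pow n M' m u w = (\<Sum>j<n. a w j * \<nu> j ^ m * f j u)" for m
    proof -
      have "mat_pow n M' m u w = (mv n M' ^^ m) e u" unfolding e_def by (rule mat_pow_col[OF u w(1)])
      also have "\<dots> = (mv n M ^^ m) e u"
        by (rule funpow_inv[of P n M M']) (use inv same w u in \<open>auto simp: P_def e_def\<close>)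
      also have "\<dots> = (\<Sum>j<n. a w j * \<nu> j ^ m * f j u)"
        by (rule colG) (use four w(1) u in \<open>auto simp: e_def\<close>)
      finally show ?thesis .
    qed
    hence "(\<lambda>m. mat_pow n M' m u w / of_nat (fact m)) sums (\<Sum>j<n. a w j * f j u)" using exp_col by simp
    hence "U_L n A' (pi / 2) u w = (\<Sum>j<n. a w j * f j u)" unfolding UL by (simp add: sums_iff)
    thus ?thesis using four[OF u w(1)] by simp
  qed
  define v where "v = (\<lambda>u::nat. (if u = x then (1::complex) else 0) - (if u = y then 1 else 0))"
  define hh where "hh = (\<lambda>u::nat. ((if u = x then (1::complex) else 0) + (if u = y then 1 else 0)) / 2)"
  define b where "b j = (a x j + a y j) / 2" for j
  define \<nu>' where "\<nu>' = c * (of_nat (card S) + 2)"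
  have hhexp: "hh u' = (\<Sum>j<n. b j * f j u')" if u': "u' < n" for u'
  proof -
    have "hh u' = ((\<Sum>j<n. a x j * f j u') + (\<Sum>j<n. a y j * f j u')) / 2"
      unfolding hh_def four[OF u' xn] four[OF u' yn] ..
    also have "\<dots> = (\<Sum>j<n. (a x j * f j u' + a y j * f j u') / 2)"
      by (simp only: sum.distrib[symmetric] sum_divide_distrib)
    also have "\<dots> = (\<Sum>j<n. b j * f j u')"
      unfolding b_def by (intro sum.cong refl) (simp add: field_simps)
    finally show ?thesis .
  qed
  have colA: "A u x = A u y" for u
    unfolding A_def cay_adjmat_def using col_xy[OF cs n2 hm xn yh] by simp
  have mvAv: "mv n A v u = 0" for u
  proof -
    have "mv n A v u = (\<Sum>w<n. (if w = x then A u x else 0) - (if w = y then A u y else 0))"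
      unfolding mv_def v_def using xy by (intro sum.cong) auto
    also have "\<dots> = (\<Sum>w<n. (if w = x then A u x else 0)) - (\<Sum>w<n. (if w = y then A u y else 0))"
      by (rule sum_subtractf)
    finally have "mv n A v u = (\<Sum>w<n. (if w = x then A u x else 0)) - (\<Sum>w<n. (if w = y then A u y else 0))" .
    thus ?thesis using xn yn colA by simp
  qed
  have eigv: "mv n M' v u = \<nu>' * v u" if "u < n" for u
  proof -
    have "mv n M' v u = c * (mv n (laplacian n A) v u + ((if u = x then 1 else 0) - (if u = y then 1 else 0)) * (v x - v y))"
      unfolding M'_def mvscale A'_def mvlap_edge[OF xy xn yn that] ..
    also have "\<dots> = \<nu>' * v u" unfolding mvlap[OF that] deg mvAv \<nu>'_def using xy by (simp add: v_def algebra_simps)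
    finally show ?thesis .
  qed
  have pst: "U_L n A' (pi / 2) u x = (if u = y then 1 else 0)" if u: "u < n" for u
  proof -
    have "mat_pow n M' m u x = (1/2) * (\<nu>' ^ m * v u) + (\<Sum>j<n. b j * \<nu> j ^ m * f j u)" for m
    proof -
      have "mat_pow n M' m u x = (mv n M' ^^ m) (\<lambda>w. if w = x then 1 else 0) u" by (rule mat_pow_col[OF u xn])
      also have "\<dots> = (1/2) * (mv n M' ^^ m) v u + 1 * (mv n M' ^^ m) hh u"
        by (rule funpow_lin) (use u xy in \<open>auto simp: v_def hh_def\<close>)
      also have "(mv n M' ^^ m) v u = (\<Sum>j\<in>{()}. 1 * \<nu>' ^ m * v u)"
        by (rule expand[of "{()}" n M' "\<lambda>_. v" "\<lambda>_. \<nu>'" v "\<lambda>_. 1" u m]) (use eigv u in auto)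
      also have "(mv n M' ^^ m) hh u = (mv n M ^^ m) hh u"
        by (rule funpow_inv[of P n M M']) (use inv same u xy in \<open>auto simp: P_def hh_def\<close>)
      also have "\<dots> = (\<Sum>j<n. b j * \<nu> j ^ m * f j u)"
      proof (rule colG)
        fix u' assume u': "u' < n"
        show "hh u' = (\<Sum>j<n. b j * f j u')" by (rule hhexp[OF u'])
      qed (rule u)
      finally show ?thesis by simp
    qed
    moreover have "(\<lambda>m. ((1/2) * (\<nu>' ^ m * v u) + (\<Sum>j<n. b j * \<nu> j ^ m * f j u)) / of_nat (fact m))
        sums ((1/2) * (exp \<nu>' * v u) + (\<Sum>j<n. b j * f j u))"
    proof -
      have s1: "(\<lambda>m. (1/2) * (v u * (\<nu>' ^ m /\<^sub>R fact m))) sums ((1/2) * (v u * exp \<nu>'))"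
        by (intro sums_mult exp_converges)
      have s2: "(\<lambda>m. (\<Sum>j<n. b j * \<nu> j ^ m * f j u) / of_nat (fact m)) sums (\<Sum>j<n. b j * f j u)" by (rule exp_col)
      have "(\<lambda>m. (1/2) * (v u * (\<nu>' ^ m /\<^sub>R fact m)) + (\<Sum>j<n. b j * \<nu> j ^ m * f j u) / of_nat (fact m))
          sums ((1/2) * (v u * exp \<nu>') + (\<Sum>j<n. b j * f j u))" by (rule sums_add[OF s1 s2])
      moreover have "(1/2) * (v u * (\<nu>' ^ m /\<^sub>R fact m)) + (\<Sum>j<n. b j * \<nu> j ^ m * f j u) / of_nat (fact m)
          = ((1/2) * (\<nu>' ^ m * v u) + (\<Sum>j<n. b j * \<nu> j ^ m * f j u)) / of_nat (fact m)" for m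
      proof -
        have "(1/2) * (v u * (\<nu>' ^ m /\<^sub>R fact m)) = (1/2) * (\<nu>' ^ m * v u) / of_nat (fact m)"
        proof -
          have "\<nu>' ^ m /\<^sub>R fact m = \<nu>' ^ m / of_nat (fact m)" by (simp add: scaleR_conv_of_real divide_inverse)
          thus ?thesis by (simp only: times_divide_eq_right mult.commute[of "v u"])
        qed
        thus ?thesis by (simp only: add_divide_distrib)
      qed
      moreover have "(1/2) * (v u * exp \<nu>') = (1/2) * (exp \<nu>' * v u)" by (simp only: mult.commute)
      ultimately show ?thesis by (simp only:)
    qed
    ultimately have "(\<lambda>m. mat_pow n M' m u x / of_nat (fact m)) sums ((1/2) * (exp \<nu>' * v u) + (\<Sum>j<n. b j * f j u))"
      by simp
    hence U: "U_L n A' (pi / 2) u x = (1/2) * (exp \<nu>' * v u) + (\<Sum>j<n. b j * f j u)" unfolding UL by (simp add: sums_iff)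
    have "exp \<nu>' = -1" unfolding \<nu>'_def c_def using c0 exp_4q2[of "int c0"] by simp
    moreover have "(\<Sum>j<n. b j * f j u) = hh u" by (rule hhexp[OF u, symmetric])
    ultimately have "U_L n A' (pi / 2) u x = (1/2) * (- 1 * v u) + hh u" unfolding U by (simp only:)
    thus ?thesis using xy by (auto simp: v_def hh_def)
  qed
  have tw: "twins n (cay_adj n S) x y"
  proof -
    have r: "cay_adj n S x w \<longleftrightarrow> cay_adj n S y w" if "w < n" for w using row_xy[OF cs n2 hm xn yh that] .
    have nx: "\<not> cay_adj n S x x" using not_adj_self[OF cs xn] .
    have ny: "\<not> cay_adj n S y y" using not_adj_self[OF cs yn] .
    have "{w. w < n \<and> cay_adj n S x w} - {y} = {w. w < n \<and> cay_adj n S y w} - {x}"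
      using r nx ny xn yn by auto
    thus ?thesis unfolding twins_def using xy by simp
  qed
  show ?thesis
  proof (intro conjI allI impI)
    show "twins n (cay_adj n S) x ((x + n div 2) mod n)" using tw unfolding y_def .
    show "lap_PST n (add_edge (cay_adjmat n S) x ((x + n div 2) mod n)) x ((x + n div 2) mod n) (pi / 2)"
      unfolding lap_PST_def y_def[symmetric] A_def[symmetric] A'_def[symmetric]
      using xn yn xy pst by (intro conjI exI[of _ 1]) auto
    fix w assume "w < n" and "w \<noteq> x \<and> w \<noteq> (x + n div 2) mod n"
    thus "lap_periodic n (add_edge (cay_adjmat n S) x ((x + n div 2) mod n)) w (pi / 2)"
      unfolding lap_periodic_def y_def[symmetric] A_def[symmetric] A'_def[symmetric]
      using per by (intro conjI exI[of _ 1]) auto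
  qed
qed

end
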